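(* Let $\alpha,\beta>0$, let $c(\psi)=\sqrt{\alpha\cos^2\psi+\beta\sin^2\psi}$, let $p\ge0$ be an integer, let $C>0$ and $\theta\ge 1/2$, and let $X_{\Delta x}^p(\Omega)$ be the discontinuous piecewise polynomial space on the periodic mesh described in the context. Suppose $R,S,\psi:[0,T]\to X_{\Delta x}^p(\Omega)$ are differentiable in time and, for every $t\in[0,T]$, satisfy (with $c=c(\psi(x,t))$ inside integrals, $x$-derivatives taken cellwise, sums over $j=1,\dots,N$) $$\sum_j\int_{\Omega_j}R_t\phi\,dx+\sum_j\int_{\Omega_j}cR\phi_x\,dx-\sum_j\Big(\overline{c}_{j+1/2}\overline{R}_{j+1/2}+\tfrac12 s_{j+1/2}\llbracket R\rrbracket_{j+1/2}\Big)\phi^-_{j+1/2}+\sum_j\Big(\overline{c}_{j-1/2}\overline{R}_{j-1/2}+\tfrac12 s_{j-1/2}\llbracket R\rrbracket_{j-1/2}\Big)\phi^+_{j-1/2}=\mathcal{B}(\phi)-\sum_j\varepsilon_j\int_{\Omega_j}R_x\phi_x\,dx$$ for all $\phi\in X_{\Delta x}^p(\Omega)$, $$\sum_j\int_{\Omega_j}S_t\eta\,dx-\sum_j\int_{\Omega_j}cS\eta_x\,dx+\sum_j\Big(\overline{c}_{j+1/2}\overline{S}_{j+1/2}-\tfrac12 s_{j+1/2}\llbracket S\rrbracket_{j+1/2}\Big)\eta^-_{j+1/2}-\sum_j\Big(\overline{c}_{j-1/2}\overline{S}_{j-1/2}-\tfrac12 s_{j-1/2}\llbracket S\rrbracket_{j-1/2}\Big)\eta^+_{j-1/2}=\mathcal{B}(\eta)-\sum_j\varepsilon_j\int_{\Omega_j}S_x\eta_x\,dx$$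 for all $\eta\in X_{\Delta x}^p(\Omega)$, and $\sum_j\int_{\Omega_j}\psi_t\zeta\,dx=\sum_j\int_{\Omega_j}\frac{R+S}{2}\zeta\,dx$ for all $\zeta\in X_{\Delta x}^p(\Omega)$. Here, for a test function $\chi$, $$\mathcal{B}(\chi)=\tfrac12\sum_j\int_{\Omega_j}c(R\chi)_x\,dx-\tfrac12\sum_j\overline{c}_{j+1/2}R^-_{j+1/2}\chi^-_{j+1/2}+\tfrac12\sum_j\overline{c}_{j-1/2}R^+_{j-1/2}\chi^+_{j-1/2}-\tfrac12\sum_j\int_{\Omega_j}c(S\chi)_x\,dx+\tfrac12\sum_j\overline{c}_{j+1/2}S^-_{j+1/2}\chi^-_{j+1/2}-\tfrac12\sum_j\overline{c}_{j-1/2}S^+_{j-1/2}\chi^+_{j-1/2},$$ $s_{j+1/2}=\max\{c^-_{j+1/2},c^+_{j+1/2}\}$, and $$\varepsilon_j=\frac{\Delta x_j\,C\,\big(\int_{\Omega_j}\mathrm{Res}^2\,dx\big)^{1/2}}{\big(\int_{\Omega_j}(R_x^2+S_x^2)\,dx\big)^{1/2}+\Delta x_j^\theta},\qquad \mathrm{Res}=(R^2+S^2)_t-\big(c(\psi)(R^2-S^2)\big)_x .$$ Then $$\frac{d}{dt}\left(\sum_{j=1}^N\int_{\Omega_j}\frac{R^2+S^2}{2}\,dx\right)\le 0.$$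
   Context: The domain $\Omega$ is partitioned into cells $\Omega_j=[x_{j-1/2},x_{j+1/2}]$, $j=1,\dots,N$, with $\Delta x_j=x_{j+1/2}-x_{j-1/2}$. $X_{\Delta x}^p(\Omega)=\{u\in L^2(\Omega): u|_{\Omega_j}$ is a polynomial of degree $\le p$ for each $j\}$. For a grid function $u$, $u^+_{j+1/2}$ and $u^-_{j+1/2}$ denote its traces at $x_{j+1/2}$ from the right and left respectively; $\overline{u}_{j+1/2}=(u^+_{j+1/2}+u^-_{j+1/2})/2$ and $\llbracket u\rrbracket_{j+1/2}=u^+_{j+1/2}-u^-_{j+1/2}$. Also $c^\pm_{j+1/2}=c(\psi^\pm_{j+1/2})$ and $\overline{c}_{j+1/2}=(c^+_{j+1/2}+c^-_{j+1/2})/2$. Periodic boundary conditions: the endpoints $x_{1/2}$ and $x_{N+1/2}$ are identified, i.e. $u^-_{1/2}:=u^-_{N+1/2}$ (trace from cell $N$) and $u^+_{N+1/2}:=u^+_{1/2}$ (trace from cell $1$), for all grid functions including $\psi$ and the test functions. *)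

theory Defs
  imports "HOL-Analysis.Analysis" "HOL-Computational_Algebra.Polynomial"
begin

text \<open>Mesh: xs k = x_{k+1/2}, k = 0..N; cell j (j = 1..N) is [xs (j-1), xs j].
  A grid function u in X^p is represented by its cellwise polynomials u j, j = 1..N.\<close>

definition cspeed :: "real \<Rightarrow> real \<Rightarrow> real \<Rightarrow> real" where
  "cspeed \<alpha> \<beta> \<psi> = sqrt (\<alpha> * (cos \<psi>)^2 + \<beta> * (sin \<psi>)^2)"

definition periodic_mesh :: "nat \<Rightarrow> (nat \<Rightarrow> real) \<Rightarrow> bool" where
  "periodic_mesh N xs \<longleftrightarrow> N \<ge> 1 \<and> (\<forall>k<N. xs k < xs (Suc k))"

definition inX :: "nat \<Rightarrow> nat \<Rightarrow> (nat \<Rightarrow> real poly) \<Rightarrow> bool" where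
  "inX N p u \<longleftrightarrow> (\<forall>j\<in>{1..N}. degree (u j) \<le> p)"

definition cellint :: "(nat \<Rightarrow> real) \<Rightarrow> nat \<Rightarrow> (real \<Rightarrow> real) \<Rightarrow> real" where
  "cellint xs j f = integral {xs (j - 1)..xs j} f"

text \<open>Left trace u^-_{k+1/2} and right trace u^+_{k+1/2}, k = 0..N, with periodic identification.\<close>
definition trL :: "nat \<Rightarrow> (nat \<Rightarrow> real) \<Rightarrow> (nat \<Rightarrow> real poly) \<Rightarrow> nat \<Rightarrow> real" where
  "trL N xs u k = (if k = 0 then poly (u N) (xs N) else poly (u k) (xs k))"

definition trR :: "nat \<Rightarrow> (nat \<Rightarrow> real) \<Rightarrow> (nat \<Rightarrow> real poly) \<Rightarrow> nat \<Rightarrow> real" where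
  "trR N xs u k = (if k = N then poly (u 1) (xs 0) else poly (u (Suc k)) (xs k))"

definition avgtr :: "nat \<Rightarrow> (nat \<Rightarrow> real) \<Rightarrow> (nat \<Rightarrow> real poly) \<Rightarrow> nat \<Rightarrow> real" where
  "avgtr N xs u k = (trR N xs u k + trL N xs u k) / 2"

definition jumptr :: "nat \<Rightarrow> (nat \<Rightarrow> real) \<Rightarrow> (nat \<Rightarrow> real poly) \<Rightarrow> nat \<Rightarrow> real" where
  "jumptr N xs u k = trR N xs u k - trL N xs u k"

definition cbar :: "real \<Rightarrow> real \<Rightarrow> nat \<Rightarrow> (nat \<Rightarrow> real) \<Rightarrow> (nat \<Rightarrow> real poly) \<Rightarrow> nat \<Rightarrow> real" where
  "cbar \<alpha> \<beta> N xs \<psi> k = (cspeed \<alpha> \<beta> (trR N xs \<psi> k) + cspeed \<alpha> \<beta> (trL N xs \<psi> k)) / 2"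

definition smax :: "real \<Rightarrow> real \<Rightarrow> nat \<Rightarrow> (nat \<Rightarrow> real) \<Rightarrow> (nat \<Rightarrow> real poly) \<Rightarrow> nat \<Rightarrow> real" where
  "smax \<alpha> \<beta> N xs \<psi> k = max (cspeed \<alpha> \<beta> (trL N xs \<psi> k)) (cspeed \<alpha> \<beta> (trR N xs \<psi> k))"

definition Bform :: "real \<Rightarrow> real \<Rightarrow> nat \<Rightarrow> (nat \<Rightarrow> real) \<Rightarrow> (nat \<Rightarrow> real poly)
    \<Rightarrow> (nat \<Rightarrow> real poly) \<Rightarrow> (nat \<Rightarrow> real poly) \<Rightarrow> (nat \<Rightarrow> real poly) \<Rightarrow> real" where
  "Bform \<alpha> \<beta> N xs \<psi> R S w =
     1/2 * (\<Sum>j=1..N. cellint xs j (\<lambda>x. cspeed \<alpha> \<beta> (poly (\<psi> j) x) * poly (pderiv (R j * w j)) x))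
   - 1/2 * (\<Sum>j=1..N. cbar \<alpha> \<beta> N xs \<psi> j * trL N xs R j * trL N xs w j)
   + 1/2 * (\<Sum>j=1..N. cbar \<alpha> \<beta> N xs \<psi> (j - 1) * trR N xs R (j - 1) * trR N xs w (j - 1))
   - 1/2 * (\<Sum>j=1..N. cellint xs j (\<lambda>x. cspeed \<alpha> \<beta> (poly (\<psi> j) x) * poly (pderiv (S j * w j)) x))
   + 1/2 * (\<Sum>j=1..N. cbar \<alpha> \<beta> N xs \<psi> j * trL N xs S j * trL N xs w j)
   - 1/2 * (\<Sum>j=1..N. cbar \<alpha> \<beta> N xs \<psi> (j - 1) * trR N xs S (j - 1) * trR N xs w (j - 1))"

text \<open>Residual Res = (R^2+S^2)_t - (c(psi)(R^2-S^2))_x on cell j; Rd, Sd are the time derivatives.\<close>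
definition resid :: "real \<Rightarrow> real \<Rightarrow> (nat \<Rightarrow> real poly) \<Rightarrow> (nat \<Rightarrow> real poly) \<Rightarrow> (nat \<Rightarrow> real poly)
    \<Rightarrow> (nat \<Rightarrow> real poly) \<Rightarrow> (nat \<Rightarrow> real poly) \<Rightarrow> nat \<Rightarrow> real \<Rightarrow> real" where
  "resid \<alpha> \<beta> \<psi> R S Rd Sd j x =
     (2 * poly (R j) x * poly (Rd j) x + 2 * poly (S j) x * poly (Sd j) x)
   - deriv (\<lambda>y. cspeed \<alpha> \<beta> (poly (\<psi> j) y) * ((poly (R j) y)^2 - (poly (S j) y)^2)) x"

definition visc :: "real \<Rightarrow> real \<Rightarrow> real \<Rightarrow> real \<Rightarrow> (nat \<Rightarrow> real) \<Rightarrow> (nat \<Rightarrow> real poly)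
    \<Rightarrow> (nat \<Rightarrow> real poly) \<Rightarrow> (nat \<Rightarrow> real poly) \<Rightarrow> (nat \<Rightarrow> real poly) \<Rightarrow> (nat \<Rightarrow> real poly) \<Rightarrow> nat \<Rightarrow> real" where
  "visc \<alpha> \<beta> C \<theta> xs \<psi> R S Rd Sd j =
     (xs j - xs (j - 1)) * C * sqrt (cellint xs j (\<lambda>x. (resid \<alpha> \<beta> \<psi> R S Rd Sd j x)^2))
     / (sqrt (cellint xs j (\<lambda>x. (poly (pderiv (R j)) x)^2 + (poly (pderiv (S j)) x)^2))
        + (xs j - xs (j - 1)) powr \<theta>)"

end

theory Submission imports Defs begin

lemma poly_sum_upto:
  fixes p :: "real poly"
  assumes "degree p \<le> Q"
  shows "poly p x = (\<Sum>k\<le>Q. coeff p k * x^k)"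
proof -
  have "poly p x = (\<Sum>k\<le>degree p. coeff p k * x^k)" by (simp add: poly_altdef)
  also have "\<dots> = (\<Sum>k\<le>Q. coeff p k * x^k)"
    by (rule sum.mono_neutral_left) (use assms in \<open>auto simp: coeff_eq_0\<close>)
  finally show ?thesis .
qed

lemma deriv_int:
  fixes f :: "real \<Rightarrow> real \<Rightarrow> real"
  assumes I: "finite I" and hi: "\<And>i. i \<in> I \<Longrightarrow> h i integrable_on K"
    and gd: "\<And>i. i \<in> I \<Longrightarrow> (g i has_real_derivative g' i) (at t within U)"
    and fe: "\<And>s x. s \<in> U \<Longrightarrow> f s x = (\<Sum>i\<in>I. g i s * h i x)"
    and t: "t \<in> U"
  shows "((\<lambda>s. integral K (f s)) has_real_derivative integral K (\<lambda>x. \<Sum>i\<in>I. g' i * h i x)) (at t within U)"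
proof -
  have e1: "integral K (f s) = (\<Sum>i\<in>I. g i s * integral K (h i))" if "s \<in> U" for s
  proof -
    have "integral K (f s) = integral K (\<lambda>x. \<Sum>i\<in>I. g i s * h i x)"
      by (rule arg_cong[where f="integral K"]) (use fe[OF that] in auto)
    also have "\<dots> = (\<Sum>i\<in>I. integral K (\<lambda>x. g i s * h i x))"
      by (rule integral_sum[OF I]) (use hi in \<open>auto intro!: integrable_on_mult_right\<close>)
    finally show ?thesis by simp
  qed
  have e2: "integral K (\<lambda>x. \<Sum>i\<in>I. g' i * h i x) = (\<Sum>i\<in>I. g' i * integral K (h i))"
  proof -
    have "integral K (\<lambda>x. \<Sum>i\<in>I. g' i * h i x) = (\<Sum>i\<in>I. integral K (\<lambda>x. g' i * h i x))"
      by (rule integral_sum[OF I]) (use hi in \<open>auto intro!: integrable_on_mult_right\<close>)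
    then show ?thesis by simp
  qed
  have "((\<lambda>s. \<Sum>i\<in>I. g i s * integral K (h i)) has_real_derivative (\<Sum>i\<in>I. g' i * integral K (h i))) (at t within U)"
    by (rule DERIV_sum) (use gd in \<open>auto intro!: derivative_eq_intros\<close>)
  then show ?thesis unfolding e2
    by (rule has_field_derivative_transform_within[where d=1]) (use t e1 in auto)
qed

lemma shift_sum:
  fixes f :: "nat \<Rightarrow> real"
  assumes "N \<ge> 1" "f 0 = f N"
  shows "(\<Sum>j=1..N. f (j - 1)) = (\<Sum>j=1..N. f j)"
proof -
  have "(\<Sum>j=1..N. f (j - 1)) = (\<Sum>k=0..N-1. f k)"
    using assms(1) by (intro sum.reindex_bij_witness[where i="\<lambda>k. k+1" and j="\<lambda>j. j - 1"]) auto
  also have "\<dots> = f 0 + (\<Sum>k=1..N-1. f k)"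
    using assms(1) by (simp add: sum.atLeast_Suc_atMost)
  also have "\<dots> = (\<Sum>k=1..N-1. f k) + f N" using assms by simp
  also have "\<dots> = (\<Sum>j=1..N. f j)"
    using assms(1) by (cases N) (auto simp: sum.cl_ivl_Suc)
  finally show ?thesis .
qed

lemma integral_nonneg_any:
  fixes f :: "real \<Rightarrow> real"
  assumes "\<And>x. x \<in> S \<Longrightarrow> 0 \<le> f x"
  shows "0 \<le> integral S f"
  using assms integral_nonneg not_integrable_integral by (metis order_refl)

lemma comb:
  fixes a1 a2 v1 v2 l1 l2 l3 l4 p1 p2 p3 p4 q1 q2 q3 q4 x w1 w2 H :: real
  shows "a1 + v1 - l1 + l2 = 1/2*(2 * v1) - 1/2*p1 + 1/2*p2 - 1/2*x + 1/2*p3 - 1/2*p4 - w1 \<Longrightarrow>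
    a2 - v2 + l3 - l4 = 1/2*x - 1/2*q1 + 1/2*q2 - 1/2*(2 * v2) + 1/2*q3 - 1/2*q4 - w2 \<Longrightarrow>
    H = l1 - l2 - l3 + l4 + 1/2*(- p1 + p2 + p3 - p4 - q1 + q2 + q3 - q4) \<Longrightarrow>
    H \<le> 0 \<Longrightarrow> 0 \<le> w1 \<Longrightarrow> 0 \<le> w2 \<Longrightarrow> a1 + a2 \<le> 0"
proof -
  assume h1: "a1 + v1 - l1 + l2 = 1/2*(2 * v1) - 1/2*p1 + 1/2*p2 - 1/2*x + 1/2*p3 - 1/2*p4 - w1"
    and h2: "a2 - v2 + l3 - l4 = 1/2*x - 1/2*q1 + 1/2*q2 - 1/2*(2 * v2) + 1/2*q3 - 1/2*q4 - w2"
    and h3: "H = l1 - l2 - l3 + l4 + 1/2*(- p1 + p2 + p3 - p4 - q1 + q2 + q3 - q4)"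
    and h4: "H \<le> 0" "0 \<le> w1" "0 \<le> w2"
  have "a1 + a2 = H - w1 - w2" using h1 h2 h3 by (simp add: field_simps)
  then show ?thesis using h4 by simp
qed

lemma trL0: "trL N xs u 0 = trL N xs u N" by (simp add: trL_def)
lemma trR0: "trR N xs u 0 = trR N xs u N" by (simp add: trR_def)

lemma prodsum:
  fixes A B :: "real poly"
  assumes "degree A \<le> Q" "degree B \<le> Q"
  shows "poly A x * poly B x = (\<Sum>i\<in>{..Q}\<times>{..Q}. coeff A (fst i) * coeff B (snd i) * (x^fst i * x^snd i))"
proof -
  have "poly A x * poly B x = (\<Sum>k\<le>Q. coeff A k * x^k) * (\<Sum>l\<le>Q. coeff B l * x^l)"
    using assms by (simp add: poly_sum_upto[of _ Q])
  also have "\<dots> = (\<Sum>k\<le>Q. \<Sum>l\<le>Q. (coeff A k * x^k) * (coeff B l * x^l))"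
    by (rule sum_product)
  also have "\<dots> = (\<Sum>i\<in>{..Q}\<times>{..Q}. (coeff A (fst i) * x^fst i) * (coeff B (snd i) * x^snd i))"
    by (simp add: sum.cartesian_product case_prod_beta)
  also have "\<dots> = (\<Sum>i\<in>{..Q}\<times>{..Q}. coeff A (fst i) * coeff B (snd i) * (x^fst i * x^snd i))"
    by (rule sum.cong) (auto simp: algebra_simps)
  finally show ?thesis .
qed

lemma cell_deriv:
  fixes R S :: "real \<Rightarrow> real poly" and Rd Sd :: "real poly"
  assumes degR: "\<And>s. s \<in> U \<Longrightarrow> degree (R s) \<le> p"
    and degS: "\<And>s. s \<in> U \<Longrightarrow> degree (S s) \<le> p"
    and Rdiff: "\<And>k. ((\<lambda>s. coeff (R s) k) has_real_derivative coeff Rd k) (at t within U)"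
    and Sdiff: "\<And>k. ((\<lambda>s. coeff (S s) k) has_real_derivative coeff Sd k) (at t within U)"
    and t: "t \<in> U"
  shows "((\<lambda>s. integral {a..b} (\<lambda>x. ((poly (R s) x)^2 + (poly (S s) x)^2) / 2)) has_real_derivative
           integral {a..b} (\<lambda>x. poly Rd x * poly (R t) x + poly Sd x * poly (S t) x)) (at t within U)"
proof -
  define Q where "Q = max p (max (degree Rd) (degree Sd))"
  define I where "I = {..Q}\<times>{..Q}"
  define h where "h = (\<lambda>(i::nat\<times>nat) (x::real). x^fst i * x^snd i)"
  define g where "g = (\<lambda>(i::nat\<times>nat) s. (coeff (R s) (fst i) * coeff (R s) (snd i) + coeff (S s) (fst i) * coeff (S s) (snd i)) / 2)"
  define g' where "g' = (\<lambda>(i::nat\<times>nat). (coeff Rd (fst i) * coeff (R t) (snd i) + coeff (R t) (fst i) * coeff Rd (snd i)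
      + coeff Sd (fst i) * coeff (S t) (snd i) + coeff (S t) (fst i) * coeff Sd (snd i)) / 2)"
  have dR: "\<And>s. s \<in> U \<Longrightarrow> degree (R s) \<le> Q" using degR unfolding Q_def by (meson max.coboundedI1)
  have dS: "\<And>s. s \<in> U \<Longrightarrow> degree (S s) \<le> Q" using degS unfolding Q_def by (meson max.coboundedI1)
  have dRd: "degree Rd \<le> Q" and dSd: "degree Sd \<le> Q" unfolding Q_def by auto
  have fe: "((poly (R s) x)^2 + (poly (S s) x)^2) / 2 = (\<Sum>i\<in>I. g i s * h i x)" if "s \<in> U" for s x
  proof -
    have "((poly (R s) x)^2 + (poly (S s) x)^2) / 2 = (poly (R s) x * poly (R s) x + poly (S s) x * poly (S s) x) / 2"
      by (simp add: power2_eq_square)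
    also have "\<dots> = ((\<Sum>i\<in>I. coeff (R s) (fst i) * coeff (R s) (snd i) * h i x) + (\<Sum>i\<in>I. coeff (S s) (fst i) * coeff (S s) (snd i) * h i x)) / 2"
      using prodsum[OF dR[OF that] dR[OF that]] prodsum[OF dS[OF that] dS[OF that]] unfolding I_def h_def by simp
    also have "\<dots> = (\<Sum>i\<in>I. g i s * h i x)"
      unfolding g_def by (simp add: sum.distrib[symmetric] sum_divide_distrib algebra_simps)
    finally show ?thesis .
  qed
  have ge: "(\<Sum>i\<in>I. g' i * h i x) = poly Rd x * poly (R t) x + poly Sd x * poly (S t) x" for x
  proof -
    have "(\<Sum>i\<in>I. g' i * h i x) = ((\<Sum>i\<in>I. coeff Rd (fst i) * coeff (R t) (snd i) * h i x) + (\<Sum>i\<in>I. coeff (R t) (fst i) * coeff Rd (snd i) * h i x)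
       + (\<Sum>i\<in>I. coeff Sd (fst i) * coeff (S t) (snd i) * h i x) + (\<Sum>i\<in>I. coeff (S t) (fst i) * coeff Sd (snd i) * h i x)) / 2"
      unfolding g'_def by (simp add: sum.distrib[symmetric] sum_divide_distrib algebra_simps)
    also have "\<dots> = (poly Rd x * poly (R t) x + poly (R t) x * poly Rd x + poly Sd x * poly (S t) x + poly (S t) x * poly Sd x) / 2"
      using prodsum[OF dRd dR[OF t], of x] prodsum[OF dR[OF t] dRd, of x] prodsum[OF dSd dS[OF t], of x] prodsum[OF dS[OF t] dSd, of x]
      unfolding I_def h_def by simp
    finally show ?thesis by simp
  qed
  have "((\<lambda>s. integral {a..b} (\<lambda>x. ((poly (R s) x)^2 + (poly (S s) x)^2) / 2)) has_real_derivative
           integral {a..b} (\<lambda>x. \<Sum>i\<in>I. g' i * h i x)) (at t within U)"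
  proof (rule deriv_int[where g=g and h=h])
    show "finite I" unfolding I_def by simp
    show "h i integrable_on {a..b}" for i
      unfolding h_def by (intro integrable_continuous_interval continuous_intros)
    show "(g i has_real_derivative g' i) (at t within U)" if "i \<in> I" for i
      unfolding g_def g'_def
      by (auto intro!: derivative_eq_intros Rdiff Sdiff simp: algebra_simps)
  qed (use fe t in auto)
  then show ?thesis using ge by simp
qed

theorem proposition2p2:
  fixes \<alpha> \<beta> C \<theta> T :: real and p N :: nat and xs :: "nat \<Rightarrow> real"
    and R S \<psi> Rd Sd \<psi>d :: "real \<Rightarrow> nat \<Rightarrow> real poly"
  assumes "\<alpha> > 0" and "\<beta> > 0" and "C > 0" and "\<theta> \<ge> 1/2"
    and mesh: "periodic_mesh N xs"
    and RX: "\<And>t. t \<in> {0..T} \<Longrightarrow> inX N p (R t)"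
    and SX: "\<And>t. t \<in> {0..T} \<Longrightarrow> inX N p (S t)"
    and psiX: "\<And>t. t \<in> {0..T} \<Longrightarrow> inX N p (\<psi> t)"
    and Rdiff: "\<And>t j k. t \<in> {0..T} \<Longrightarrow> j \<in> {1..N} \<Longrightarrow>
        ((\<lambda>s. coeff (R s j) k) has_real_derivative coeff (Rd t j) k) (at t within {0..T})"
    and Sdiff: "\<And>t j k. t \<in> {0..T} \<Longrightarrow> j \<in> {1..N} \<Longrightarrow>
        ((\<lambda>s. coeff (S s j) k) has_real_derivative coeff (Sd t j) k) (at t within {0..T})"
    and psidiff: "\<And>t j k. t \<in> {0..T} \<Longrightarrow> j \<in> {1..N} \<Longrightarrow>
        ((\<lambda>s. coeff (\<psi> s j) k) has_real_derivative coeff (\<psi>d t j) k) (at t within {0..T})"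
    and eqR: "\<And>t \<phi>. t \<in> {0..T} \<Longrightarrow> inX N p \<phi> \<Longrightarrow>
        (\<Sum>j=1..N. cellint xs j (\<lambda>x. poly (Rd t j) x * poly (\<phi> j) x))
      + (\<Sum>j=1..N. cellint xs j (\<lambda>x. cspeed \<alpha> \<beta> (poly (\<psi> t j) x) * poly (R t j) x * poly (pderiv (\<phi> j)) x))
      - (\<Sum>j=1..N. (cbar \<alpha> \<beta> N xs (\<psi> t) j * avgtr N xs (R t) j
                    + 1/2 * smax \<alpha> \<beta> N xs (\<psi> t) j * jumptr N xs (R t) j) * trL N xs \<phi> j)
      + (\<Sum>j=1..N. (cbar \<alpha> \<beta> N xs (\<psi> t) (j - 1) * avgtr N xs (R t) (j - 1)
                    + 1/2 * smax \<alpha> \<beta> N xs (\<psi> t) (j - 1) * jumptr N xs (R t) (j - 1)) * trR N xs \<phi> (j - 1))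
      = Bform \<alpha> \<beta> N xs (\<psi> t) (R t) (S t) \<phi>
      - (\<Sum>j=1..N. visc \<alpha> \<beta> C \<theta> xs (\<psi> t) (R t) (S t) (Rd t) (Sd t) j
           * cellint xs j (\<lambda>x. poly (pderiv (R t j)) x * poly (pderiv (\<phi> j)) x))"
    and eqS: "\<And>t \<eta>. t \<in> {0..T} \<Longrightarrow> inX N p \<eta> \<Longrightarrow>
        (\<Sum>j=1..N. cellint xs j (\<lambda>x. poly (Sd t j) x * poly (\<eta> j) x))
      - (\<Sum>j=1..N. cellint xs j (\<lambda>x. cspeed \<alpha> \<beta> (poly (\<psi> t j) x) * poly (S t j) x * poly (pderiv (\<eta> j)) x))
      + (\<Sum>j=1..N. (cbar \<alpha> \<beta> N xs (\<psi> t) j * avgtr N xs (S t) j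
                    - 1/2 * smax \<alpha> \<beta> N xs (\<psi> t) j * jumptr N xs (S t) j) * trL N xs \<eta> j)
      - (\<Sum>j=1..N. (cbar \<alpha> \<beta> N xs (\<psi> t) (j - 1) * avgtr N xs (S t) (j - 1)
                    - 1/2 * smax \<alpha> \<beta> N xs (\<psi> t) (j - 1) * jumptr N xs (S t) (j - 1)) * trR N xs \<eta> (j - 1))
      = Bform \<alpha> \<beta> N xs (\<psi> t) (R t) (S t) \<eta>
      - (\<Sum>j=1..N. visc \<alpha> \<beta> C \<theta> xs (\<psi> t) (R t) (S t) (Rd t) (Sd t) j
           * cellint xs j (\<lambda>x. poly (pderiv (S t j)) x * poly (pderiv (\<eta> j)) x))"
    and eqpsi: "\<And>t \<zeta>. t \<in> {0..T} \<Longrightarrow> inX N p \<zeta> \<Longrightarrow>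
        (\<Sum>j=1..N. cellint xs j (\<lambda>x. poly (\<psi>d t j) x * poly (\<zeta> j) x))
      = (\<Sum>j=1..N. cellint xs j (\<lambda>x. (poly (R t j) x + poly (S t j) x) / 2 * poly (\<zeta> j) x))"
  shows "\<forall>t\<in>{0..T}. \<exists>D.
     ((\<lambda>s. \<Sum>j=1..N. cellint xs j (\<lambda>x. ((poly (R s j) x)^2 + (poly (S s j) x)^2) / 2))
        has_real_derivative D) (at t within {0..T}) \<and> D \<le> 0"
proof (intro ballI)
  fix t assume t: "t \<in> {0..T}"
  have N1: "N \<ge> 1" using mesh by (simp add: periodic_mesh_def)
  have dx: "xs (j - 1) < xs j" if "j \<in> {1..N}" for j
  proof -
    have "j - 1 < N" "Suc (j - 1) = j" using that by auto
    then show ?thesis using mesh unfolding periodic_mesh_def by metis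
  qed
  have degRX: "\<And>s j. s \<in> {0..T} \<Longrightarrow> j \<in> {1..N} \<Longrightarrow> degree (R s j) \<le> p"
    using RX by (simp add: inX_def)
  have degSX: "\<And>s j. s \<in> {0..T} \<Longrightarrow> j \<in> {1..N} \<Longrightarrow> degree (S s j) \<le> p"
    using SX by (simp add: inX_def)
  let ?cb = "cbar \<alpha> \<beta> N xs (\<psi> t)"
  let ?sm = "smax \<alpha> \<beta> N xs (\<psi> t)"
  let ?aR = "trL N xs (R t)" let ?bR = "trR N xs (R t)"
  let ?aS = "trL N xs (S t)" let ?bS = "trR N xs (S t)"
  let ?avR = "avgtr N xs (R t)" let ?jR = "jumptr N xs (R t)"
  let ?avS = "avgtr N xs (S t)" let ?jS = "jumptr N xs (S t)"
  let ?A1 = "\<Sum>j=1..N. cellint xs j (\<lambda>x. poly (Rd t j) x * poly (R t j) x)"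
  let ?A2 = "\<Sum>j=1..N. cellint xs j (\<lambda>x. poly (Sd t j) x * poly (S t j) x)"
  have der: "((\<lambda>s. \<Sum>j=1..N. cellint xs j (\<lambda>x. ((poly (R s j) x)^2 + (poly (S s j) x)^2) / 2))
     has_real_derivative (\<Sum>j=1..N. cellint xs j (\<lambda>x. poly (Rd t j) x * poly (R t j) x + poly (Sd t j) x * poly (S t j) x)))
     (at t within {0..T})"
    unfolding cellint_def
    using t degRX degSX by (intro DERIV_sum cell_deriv[where p=p] Rdiff Sdiff) auto
  have split: "(\<Sum>j=1..N. cellint xs j (\<lambda>x. poly (Rd t j) x * poly (R t j) x + poly (Sd t j) x * poly (S t j) x)) = ?A1 + ?A2"
    unfolding cellint_def sum.distrib[symmetric]
    by (rule sum.cong) (auto intro!: integral_add integrable_continuous_interval continuous_intros)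
  note eR = eqR[OF t RX[OF t], unfolded Bform_def]
  note eS = eqS[OF t SX[OF t], unfolded Bform_def]
  have vR: "(\<Sum>j=1..N. cellint xs j (\<lambda>x. cspeed \<alpha> \<beta> (poly (\<psi> t j) x) * poly (pderiv (R t j * R t j)) x))
     = 2 * (\<Sum>j=1..N. cellint xs j (\<lambda>x. cspeed \<alpha> \<beta> (poly (\<psi> t j) x) * poly (R t j) x * poly (pderiv (R t j)) x))"
  proof -
    have "\<And>j. (\<lambda>x. cspeed \<alpha> \<beta> (poly (\<psi> t j) x) * poly (pderiv (R t j * R t j)) x)
      = (\<lambda>x. 2 * (cspeed \<alpha> \<beta> (poly (\<psi> t j) x) * poly (R t j) x * poly (pderiv (R t j)) x))"
      by (auto simp: pderiv_mult algebra_simps)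
    then show ?thesis by (simp add: cellint_def sum_distrib_left)
  qed
  have vS: "(\<Sum>j=1..N. cellint xs j (\<lambda>x. cspeed \<alpha> \<beta> (poly (\<psi> t j) x) * poly (pderiv (S t j * S t j)) x))
     = 2 * (\<Sum>j=1..N. cellint xs j (\<lambda>x. cspeed \<alpha> \<beta> (poly (\<psi> t j) x) * poly (S t j) x * poly (pderiv (S t j)) x))"
  proof -
    have "\<And>j. (\<lambda>x. cspeed \<alpha> \<beta> (poly (\<psi> t j) x) * poly (pderiv (S t j * S t j)) x)
      = (\<lambda>x. 2 * (cspeed \<alpha> \<beta> (poly (\<psi> t j) x) * poly (S t j) x * poly (pderiv (S t j)) x))"
      by (auto simp: pderiv_mult algebra_simps)
    then show ?thesis by (simp add: cellint_def sum_distrib_left)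
  qed
  have vX: "(\<Sum>j=1..N. cellint xs j (\<lambda>x. cspeed \<alpha> \<beta> (poly (\<psi> t j) x) * poly (pderiv (S t j * R t j)) x))
     = (\<Sum>j=1..N. cellint xs j (\<lambda>x. cspeed \<alpha> \<beta> (poly (\<psi> t j) x) * poly (pderiv (R t j * S t j)) x))"
  proof -
    have "\<And>j. S t j * R t j = R t j * S t j" by (simp add: mult.commute)
    then show ?thesis by (simp only:)
  qed
  have per: "f 0 = f N" if "f = (\<lambda>k. G (?cb k) (?sm k) (?aR k) (?bR k) (?aS k) (?bS k))" for f G
    using that by (simp add: cbar_def smax_def trL0 trR0)
  have sh1: "(\<Sum>j=1..N. (?cb (j - 1) * ?avR (j - 1) + 1/2 * ?sm (j - 1) * ?jR (j - 1)) * ?bR (j - 1))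
     = (\<Sum>j=1..N. (?cb j * ?avR j + 1/2 * ?sm j * ?jR j) * ?bR j)"
    by (rule shift_sum[OF N1]) (simp add: cbar_def smax_def avgtr_def jumptr_def trL0 trR0)
  have sh2: "(\<Sum>j=1..N. (?cb (j - 1) * ?avS (j - 1) - 1/2 * ?sm (j - 1) * ?jS (j - 1)) * ?bS (j - 1))
     = (\<Sum>j=1..N. (?cb j * ?avS j - 1/2 * ?sm j * ?jS j) * ?bS j)"
    by (rule shift_sum[OF N1]) (simp add: cbar_def smax_def avgtr_def jumptr_def trL0 trR0)
  have sh3: "(\<Sum>j=1..N. ?cb (j - 1) * ?bR (j - 1) * ?bR (j - 1)) = (\<Sum>j=1..N. ?cb j * ?bR j * ?bR j)"
    by (rule shift_sum[OF N1]) (simp add: cbar_def trL0 trR0)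
  have sh4: "(\<Sum>j=1..N. ?cb (j - 1) * ?bS (j - 1) * ?bR (j - 1)) = (\<Sum>j=1..N. ?cb j * ?bS j * ?bR j)"
    by (rule shift_sum[OF N1]) (simp add: cbar_def trL0 trR0)
  have sh5: "(\<Sum>j=1..N. ?cb (j - 1) * ?bR (j - 1) * ?bS (j - 1)) = (\<Sum>j=1..N. ?cb j * ?bR j * ?bS j)"
    by (rule shift_sum[OF N1]) (simp add: cbar_def trL0 trR0)
  have sh6: "(\<Sum>j=1..N. ?cb (j - 1) * ?bS (j - 1) * ?bS (j - 1)) = (\<Sum>j=1..N. ?cb j * ?bS j * ?bS j)"
    by (rule shift_sum[OF N1]) (simp add: cbar_def trL0 trR0)
  define h where "h = (\<lambda>j. (?cb j * ?avR j + 1/2 * ?sm j * ?jR j) * ?aR j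
      - (?cb j * ?avR j + 1/2 * ?sm j * ?jR j) * ?bR j
      - (?cb j * ?avS j - 1/2 * ?sm j * ?jS j) * ?aS j
      + (?cb j * ?avS j - 1/2 * ?sm j * ?jS j) * ?bS j
      + 1/2 * (- (?cb j * ?aR j * ?aR j) + ?cb j * ?bR j * ?bR j + ?cb j * ?aS j * ?aR j - ?cb j * ?bS j * ?bR j
               - ?cb j * ?aR j * ?aS j + ?cb j * ?bR j * ?bS j + ?cb j * ?aS j * ?aS j - ?cb j * ?bS j * ?bS j))"
  have hsum: "(\<Sum>j=1..N. h j) =
      (\<Sum>j=1..N. (?cb j * ?avR j + 1/2 * ?sm j * ?jR j) * ?aR j)
    - (\<Sum>j=1..N. (?cb j * ?avR j + 1/2 * ?sm j * ?jR j) * ?bR j)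
    - (\<Sum>j=1..N. (?cb j * ?avS j - 1/2 * ?sm j * ?jS j) * ?aS j)
    + (\<Sum>j=1..N. (?cb j * ?avS j - 1/2 * ?sm j * ?jS j) * ?bS j)
    + 1/2 * (- (\<Sum>j=1..N. ?cb j * ?aR j * ?aR j) + (\<Sum>j=1..N. ?cb j * ?bR j * ?bR j)
       + (\<Sum>j=1..N. ?cb j * ?aS j * ?aR j) - (\<Sum>j=1..N. ?cb j * ?bS j * ?bR j)
       - (\<Sum>j=1..N. ?cb j * ?aR j * ?aS j) + (\<Sum>j=1..N. ?cb j * ?bR j * ?bS j)
       + (\<Sum>j=1..N. ?cb j * ?aS j * ?aS j) - (\<Sum>j=1..N. ?cb j * ?bS j * ?bS j))"
    unfolding h_def by (simp only: sum.distrib sum_subtractf sum_distrib_left[symmetric] sum_negf)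
  have hle: "h j \<le> 0" for j
  proof -
    have sm0: "?sm j \<ge> 0" by (simp add: smax_def cspeed_def le_max_iff_disj \<open>\<alpha> > 0\<close> \<open>\<beta> > 0\<close> less_imp_le)
    have "h j = - (1/2) * ?sm j * ((?bR j - ?aR j)^2 + (?bS j - ?aS j)^2)"
      unfolding h_def avgtr_def jumptr_def by (simp add: power2_eq_square field_simps)
    also have "\<dots> \<le> 0" using sm0 by (simp add: mult_nonneg_nonneg)
    finally show ?thesis .
  qed
  have hs: "(\<Sum>j=1..N. h j) \<le> 0" by (rule sum_nonpos) (use hle in auto)
  have vpos: "visc \<alpha> \<beta> C \<theta> xs (\<psi> t) (R t) (S t) (Rd t) (Sd t) j \<ge> 0" if "j \<in> {1..N}" for j
    using dx[OF that] \<open>C > 0\<close> unfolding visc_def cellint_def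
    by (intro divide_nonneg_nonneg mult_nonneg_nonneg add_nonneg_nonneg real_sqrt_ge_zero integral_nonneg_any) auto
  have W1: "(\<Sum>j=1..N. visc \<alpha> \<beta> C \<theta> xs (\<psi> t) (R t) (S t) (Rd t) (Sd t) j
           * cellint xs j (\<lambda>x. poly (pderiv (R t j)) x * poly (pderiv (R t j)) x)) \<ge> 0"
    by (rule sum_nonneg, rule mult_nonneg_nonneg, erule vpos) (unfold cellint_def,
        auto intro!: integral_nonneg integrable_continuous_interval continuous_intros)
  have W2: "(\<Sum>j=1..N. visc \<alpha> \<beta> C \<theta> xs (\<psi> t) (R t) (S t) (Rd t) (Sd t) j
           * cellint xs j (\<lambda>x. poly (pderiv (S t j)) x * poly (pderiv (S t j)) x)) \<ge> 0"
    by (rule sum_nonneg, rule mult_nonneg_nonneg, erule vpos) (unfold cellint_def,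
        auto intro!: integral_nonneg integrable_continuous_interval continuous_intros)
  note eR2 = eR[unfolded vR vX sh1 sh3 sh4]
  note eS2 = eS[unfolded vS sh2 sh5 sh6]
  have "?A1 + ?A2 \<le> 0"
    by (rule comb[OF eR2 eS2 hsum hs W1 W2])
  then show "\<exists>D. ((\<lambda>s. \<Sum>j=1..N. cellint xs j (\<lambda>x. ((poly (R s j) x)^2 + (poly (S s j) x)^2) / 2))
        has_real_derivative D) (at t within {0..T}) \<and> D \<le> 0"
    using der split by auto
qed

end
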